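(* Let $Q=ax^2+bxy+cy^2\in\mathcal{Q}_N(d_K)$ and let $P$ be a subgroup of $I_K(\mathfrak{n})$ with $P_{K,1}(\mathfrak{n})\subseteq P\subseteq P_K(\mathfrak{n})$. Then every class $C\in P_K(\mathfrak{n})/P$ can be written as $C=[(u\omega_Q+v)\mathcal{O}_K]$ for some integers $u,v$, not both zero, such that $\gcd(N,\,Q(v,-u))=1$.
   Context: Let $K$ be an imaginary quadratic field with discriminant $d_K$ and ring of integers $\mathcal{O}_K$. Let $N$ be a positive integer and $\mathfrak{n}=N\mathcal{O}_K$. $I_K(\mathfrak{n})$ denotes the group of fractional ideals of $K$ relatively prime to $\mathfrak{n}$, $P_K(\mathfrak{n})$ its subgroup of principal fractional ideals, and $P_{K,1}(\mathfrak{n})=\{\nu\mathcal{O}_K:\nu\in K^*,\ \nu\equiv^*1\pmod{\mathfrak{n}}\}$, where $\equiv^*$ is multiplicative congruence. $\mathcal{Q}(d_K)$ is the set of primitive positive definite binary quadratic forms $ax^2+bxy+cy^2\in\mathbb{Z}[x,y]$ with $b^2-4ac=d_K$, and $\mathcal{Q}_N(d_K)=\{ax^2+bxy+cy^2\in\mathcal{Q}(d_K):\gcd(N,a)=1\}$. For $Q=ax^2+bxy+cy^2\in\mathcal{Q}(d_K)$, $\omega_Q=(-b+\sqrt{d_K})/(2a)$, the root of $Q(x,1)$ in the upper half-plane $\mathbb{H}$. *)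

theory Defs
  imports "HOL-Computational_Algebra.Computational_Algebra" "HOL-Number_Theory.Number_Theory"
begin

text \<open>Imaginary quadratic field K = Q(sqrt d) of (fundamental) discriminant d < 0,
  realised inside the complex numbers, with sqrt d = i * sqrt(-d).\<close>

definition fund_disc :: "int \<Rightarrow> bool" where
  "fund_disc d \<longleftrightarrow>
     (d mod 4 = 1 \<and> squarefree d) \<or>
     (\<exists>m. d = 4 * m \<and> (m mod 4 = 2 \<or> m mod 4 = 3) \<and> squarefree m)"

definition sqrtd :: "int \<Rightarrow> complex" where
  "sqrtd d = \<i> * complex_of_real (sqrt (- real_of_int d))"

definition Kf :: "int \<Rightarrow> complex set" where
  "Kf d = {of_rat p + of_rat q * sqrtd d | p q. True}"

definition OK :: "int \<Rightarrow> complex set" where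
  "OK d = {x \<in> Kf d. algebraic_int x}"

definition frac_ideal :: "int \<Rightarrow> complex set \<Rightarrow> bool" where
  "frac_ideal d I \<longleftrightarrow> I \<subseteq> Kf d \<and> 0 \<in> I \<and> I \<noteq> {0} \<and>
     (\<forall>x\<in>I. \<forall>y\<in>I. x + y \<in> I) \<and> (\<forall>r\<in>OK d. \<forall>x\<in>I. r * x \<in> I) \<and>
     (\<exists>c\<in>OK d. c \<noteq> 0 \<and> (\<forall>x\<in>I. c * x \<in> OK d))"

definition fid_prod :: "complex set \<Rightarrow> complex set \<Rightarrow> complex set" where
  "fid_prod I J = {\<Sum>i<(n::nat). x i * y i | n x y. \<forall>i<n. x i \<in> I \<and> y i \<in> J}"

definition fid_sum :: "complex set \<Rightarrow> complex set \<Rightarrow> complex set" where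
  "fid_sum I J = {x + y | x y. x \<in> I \<and> y \<in> J}"

definition frac_inv :: "int \<Rightarrow> complex set \<Rightarrow> complex set" where
  "frac_inv d I = {x \<in> Kf d. \<forall>y\<in>I. x * y \<in> OK d}"

definition prin :: "int \<Rightarrow> complex \<Rightarrow> complex set" where
  "prin d x = {x * y | y. y \<in> OK d}"

text \<open>Integral ideal coprime to n = N O_K.\<close>
definition int_coprime :: "int \<Rightarrow> int \<Rightarrow> complex set \<Rightarrow> bool" where
  "int_coprime d N A \<longleftrightarrow> frac_ideal d A \<and> A \<subseteq> OK d \<and>
     fid_sum A (prin d (of_int N)) = OK d"

text \<open>I_K(n): fractional ideals relatively prime to n, i.e. of the form A B^{-1}
  with A, B integral ideals coprime to n (equivalently I B = A).\<close>
definition IK :: "int \<Rightarrow> int \<Rightarrow> complex set set" where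
  "IK d N = {I. frac_ideal d I \<and>
     (\<exists>A B. int_coprime d N A \<and> int_coprime d N B \<and> fid_prod I B = A)}"

definition PK :: "int \<Rightarrow> int \<Rightarrow> complex set set" where
  "PK d N = {prin d x | x. x \<in> Kf d \<and> x \<noteq> 0 \<and> prin d x \<in> IK d N}"

text \<open>Multiplicative congruence nu == 1 mod* n: nu = alpha / beta with alpha, beta in O_K
  coprime to n and alpha == beta mod n.\<close>
definition mult_cong1 :: "int \<Rightarrow> int \<Rightarrow> complex \<Rightarrow> bool" where
  "mult_cong1 d N \<nu> \<longleftrightarrow> (\<exists>\<alpha> \<beta>. \<alpha> \<in> OK d \<and> \<beta> \<in> OK d \<and> \<alpha> \<noteq> 0 \<and> \<beta> \<noteq> 0 \<and>
      int_coprime d N (prin d \<alpha>) \<and> int_coprime d N (prin d \<beta>) \<and>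
      \<alpha> - \<beta> \<in> prin d (of_int N) \<and> \<nu> = \<alpha> / \<beta>)"

definition PK1 :: "int \<Rightarrow> int \<Rightarrow> complex set set" where
  "PK1 d N = {prin d \<nu> | \<nu>. \<nu> \<in> Kf d \<and> \<nu> \<noteq> 0 \<and> mult_cong1 d N \<nu>}"

definition subgroup_IK :: "int \<Rightarrow> int \<Rightarrow> complex set set \<Rightarrow> bool" where
  "subgroup_IK d N P \<longleftrightarrow> P \<subseteq> IK d N \<and> OK d \<in> P \<and>
     (\<forall>I\<in>P. \<forall>J\<in>P. fid_prod I J \<in> P) \<and> (\<forall>I\<in>P. frac_inv d I \<in> P)"

definition QN :: "int \<Rightarrow> int \<Rightarrow> int \<Rightarrow> int \<Rightarrow> int \<Rightarrow> bool" where
  "QN d N a b c \<longleftrightarrow> b^2 - 4*a*c = d \<and> a > 0 \<and> gcd a (gcd b c) = 1 \<and> gcd N a = 1"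

definition qf :: "int \<Rightarrow> int \<Rightarrow> int \<Rightarrow> int \<Rightarrow> int \<Rightarrow> int" where
  "qf a b c x y = a*x^2 + b*x*y + c*y^2"

definition omegaQ :: "int \<Rightarrow> int \<Rightarrow> int \<Rightarrow> complex" where
  "omegaQ d a b = (- of_int b + sqrtd d) / (2 * of_int a)"

end

theory Submission imports Defs begin

lemma sqrtd_sq: "d < 0 \<Longrightarrow> sqrtd d * sqrtd d = of_int d"
proof -
  assume "d < 0"
  then have h: "sqrt (- real_of_int d) * sqrt (- real_of_int d) = - real_of_int d" by simp
  have "sqrtd d * sqrtd d = - complex_of_real (sqrt (- real_of_int d) * sqrt (- real_of_int d))"
    unfolding sqrtd_def of_real_mult by (simp add: algebra_simps)
  also have "\<dots> = of_int d" unfolding h by simp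
  finally show ?thesis .
qed

lemma Re_sqrtd [simp]: "Re (sqrtd d) = 0" by (simp add: sqrtd_def)
lemma Im_sqrtd [simp]: "Im (sqrtd d) = sqrt (- real_of_int d)" by (simp add: sqrtd_def)
lemma cnj_sqrtd [simp]: "cnj (sqrtd d) = - sqrtd d" by (simp add: sqrtd_def complex_eq_iff)

definition ww :: "int \<Rightarrow> complex" where "ww d = (of_int d + sqrtd d) / 2"

lemma Kf_I: "z = of_rat p + of_rat q * sqrtd d \<Longrightarrow> z \<in> Kf d"
  unfolding Kf_def by blast

lemma rep_Kf: "of_int s + of_int t * ww d \<in> Kf d"
proof (rule Kf_I[where p = "of_int s + of_int t * of_int d / 2" and q = "of_int t / 2"])
  show "of_int s + of_int t * ww d = of_rat (of_int s + of_int t * of_int d / 2) + of_rat (of_int t / 2) * sqrtd d"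
    by (simp add: ww_def of_rat_add of_rat_mult of_rat_divide field_simps)
qed

lemma Kf_div:
  assumes d: "d < 0" and x: "x \<in> Kf d" and y: "y \<in> Kf d"
  shows "x / y \<in> Kf d"
proof -
  obtain p1 q1 where x1: "x = of_rat p1 + of_rat q1 * sqrtd d" using x unfolding Kf_def by blast
  obtain p2 q2 where y1: "y = of_rat p2 + of_rat q2 * sqrtd d" using y unfolding Kf_def by blast
  define D where "D = p2 * p2 - q2 * q2 * of_int d"
  show ?thesis
  proof (cases "D = 0")
    case True
    have "p2 * p2 + q2 * q2 * of_int (-d) = 0" using True by (simp add: D_def)
    moreover have "p2 * p2 \<ge> 0" by simp
    moreover have "q2 * q2 * of_int (-d) \<ge> 0"
    proof (rule mult_nonneg_nonneg)
      show "q2 * q2 \<ge> 0" by simp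
    qed (use d in simp)
    ultimately have "p2 * p2 = 0" "q2 * q2 * of_int (-d) = 0" by linarith+
    then have "p2 = 0" "q2 = 0" using d by auto
    then have "y = 0" using y1 by simp
    then show ?thesis by (intro Kf_I[where p=0 and q=0]) simp
  next
    case False
    define c where "c = of_rat p2 - of_rat q2 * sqrtd d"
    have yc: "y * c = of_rat D"
      unfolding y1 c_def D_def using sqrtd_sq[OF d]
      by (simp add: of_rat_mult of_rat_diff algebra_simps)
    have Dc: "(of_rat D :: complex) \<noteq> 0" using False by simp
    have "y \<noteq> 0" "c \<noteq> 0" using yc Dc by auto
    then have "x / y = x * c / (y * c)" by simp
    also have "\<dots> = x * c / of_rat D" by (simp add: yc)
    also have "\<dots> = of_rat ((p1 * p2 - q1 * q2 * of_int d) / D) + of_rat ((q1 * p2 - p1 * q2) / D) * sqrtd d"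
      unfolding x1 c_def using sqrtd_sq[OF d] Dc
      by (simp add: of_rat_mult of_rat_diff of_rat_divide field_simps)
    finally show ?thesis by (rule Kf_I)
  qed
qed

lemma ev_add: "poly (map_poly (of_int :: int \<Rightarrow> 'a::comm_ring_1) (P + Q)) z = poly (map_poly of_int P) z + poly (map_poly of_int Q) z"
proof -
  have "map_poly (of_int :: int \<Rightarrow> 'a) (P + Q) = map_poly of_int P + map_poly of_int Q"
    by (rule poly_eqI) (simp add: coeff_map_poly)
  then show ?thesis by simp
qed

lemma ev_smult: "poly (map_poly (of_int :: int \<Rightarrow> 'a::comm_ring_1) (Polynomial.smult a Q)) z = of_int a * poly (map_poly of_int Q) z"
proof -
  have "map_poly (of_int :: int \<Rightarrow> 'a) (Polynomial.smult a Q) = Polynomial.smult (of_int a) (map_poly of_int Q)"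
    by (rule poly_eqI) (simp add: coeff_map_poly)
  then show ?thesis by simp
qed

lemma ev_pCons: "poly (map_poly (of_int :: int \<Rightarrow> 'a::comm_ring_1) (pCons a Q)) z = of_int a + z * poly (map_poly of_int Q) z"
  by (simp add: map_poly_pCons)

lemma ev_mult: "poly (map_poly (of_int :: int \<Rightarrow> 'a::comm_ring_1) (P * Q)) z = poly (map_poly of_int P) z * poly (map_poly of_int Q) z"
proof (induction P)
  case 0
  then show ?case by simp
next
  case (pCons a P)
  show ?case
    by (simp only: mult_pCons_left ev_add ev_smult ev_pCons pCons.IH) (simp add: algebra_simps)
qed

lemma deg1_poly: "degree (R::'a::zero poly) \<le> 1 \<Longrightarrow> R = [:Polynomial.coeff R 0, Polynomial.coeff R 1:]"
  by (rule poly_eqI) (auto simp: coeff_pCons coeff_eq_0 split: nat.split)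

lemma alg_int_TM:
  assumes d: "d < 0" and z: "z = of_rat p + of_rat q * sqrtd d" and ai: "algebraic_int z"
  shows "2 * p \<in> \<int> \<and> p * p - q * q * of_int d \<in> \<int>"
proof (cases "q = 0")
  case True
  then have "z \<in> \<rat>" using z by simp
  then have "z \<in> \<int>" using rational_algebraic_int_is_int ai by blast
  then obtain k where "z = of_int k" by (auto elim: Ints_cases)
  then have "of_rat p = (of_rat (of_int k) :: complex)" using z True by simp
  then have "p = of_int k" by (simp only: of_rat_eq_iff)
  then show ?thesis using True by simp
next
  case False
  obtain f :: "int poly" where f: "poly (map_poly of_int f) z = 0" "lead_coeff f = 1"
    using ai algebraic_int_altdef_ipoly by blast
  obtain a1 b1 where pq: "quotient_of p = (a1, b1)" by (cases "quotient_of p")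
  obtain a2 b2 where qq: "quotient_of q = (a2, b2)" by (cases "quotient_of q")
  have b1: "b1 > 0" using pq by (rule quotient_of_denom_pos)
  have b2: "b2 > 0" using qq by (rule quotient_of_denom_pos)
  have pe: "p = of_int a1 / of_int b1" using pq by (rule quotient_of_div)
  have qe: "q = of_int a2 / of_int b2" using qq by (rule quotient_of_div)
  define e where "e = b1 * b1 * b2 * b2"
  define t1 where "t1 = 2 * a1 * b1 * b2 * b2"
  define n1 where "n1 = a1 * a1 * b2 * b2 - a2 * a2 * b1 * b1 * d"
  define MZ where "MZ = [:n1, - t1, e:]"
  have e0: "e > 0" using b1 b2 by (simp add: e_def)
  have MZ0: "MZ \<noteq> 0" using e0 by (simp add: MZ_def)
  have degMZ: "degree MZ = 2" using e0 by (simp add: MZ_def)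
  have lcMZ: "lead_coeff MZ = e" using degMZ by (simp add: MZ_def numeral_2_eq_2)
  have zp: "z = of_int a1 / of_int b1 + of_int a2 / of_int b2 * sqrtd d"
    using z pe qe by (simp add: of_rat_divide)
  have evMZ: "poly (map_poly of_int MZ) z = 0"
  proof -
    have "poly (map_poly of_int MZ) z = of_int n1 + z * (- of_int t1 + z * of_int e)"
      by (simp add: MZ_def map_poly_pCons)
    also have "\<dots> = 0"
      unfolding zp n1_def t1_def e_def using b1 b2 sqrtd_sq[OF d]
      by (simp add: field_simps)
    finally show ?thesis .
  qed
  obtain G R where pd: "pseudo_divmod f MZ = (G, R)" by (cases "pseudo_divmod f MZ")
  define E where "E = e ^ (Suc (degree f) - degree MZ)"
  have eq1: "Polynomial.smult E f = MZ * G + R" using pseudo_divmod(1)[OF MZ0 pd] lcMZ by (simp add: E_def)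
  have Rdeg: "R = 0 \<or> degree R < degree MZ" using pseudo_divmod(2)[OF MZ0 pd] .
  have evR: "poly (map_poly of_int R) z = 0"
  proof -
    have "of_int E * poly (map_poly of_int f) z = poly (map_poly of_int MZ) z * poly (map_poly of_int G) z + poly (map_poly of_int R) z"
      using arg_cong[OF eq1, of "\<lambda>P. poly (map_poly of_int P) z"] by (simp only: ev_smult ev_add ev_mult)
    then show ?thesis using f evMZ by simp
  qed
  have R0: "R = 0"
  proof -
    have "degree R \<le> 1" using Rdeg degMZ by auto
    then have Rf: "R = [:Polynomial.coeff R 0, Polynomial.coeff R 1:]" by (rule deg1_poly)
    have h: "of_int (Polynomial.coeff R 0) + z * of_int (Polynomial.coeff R 1) = 0"
      using evR by (subst (asm) Rf) (simp add: map_poly_pCons)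
    have i1: "Im (of_int (Polynomial.coeff R 0) + z * of_int (Polynomial.coeff R 1)) = of_int (Polynomial.coeff R 1) * (of_int a2 / of_int b2 * sqrt (- of_int d))"
      unfolding zp by simp
    have i2: "Im (of_int (Polynomial.coeff R 0) + z * of_int (Polynomial.coeff R 1)) = 0"
      by (simp only: h) simp
    have "of_int (Polynomial.coeff R 1) * (of_int a2 / of_int b2 * sqrt (- of_int d)) = (0::real)" using i1 i2 by linarith
    moreover have "a2 \<noteq> 0" using False qe by auto
    moreover have "sqrt (- real_of_int d) \<noteq> 0" using d by simp
    ultimately have r1: "Polynomial.coeff R 1 = 0" using b2 by simp
    then have "Polynomial.coeff R 0 = 0" using h by simp
    with r1 Rf show ?thesis by simp
  qed
  have eq2: "Polynomial.smult E f = MZ * G" using eq1 R0 by simp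
  have E0: "E \<noteq> 0" using e0 by (simp add: E_def)
  have cfd: "content f dvd 1"
    using content_dvd_coeff[of f "degree f"] f(2) by simp
  have cf: "content f = 1"
    using cfd normalize_content[of f] by (metis is_unit_normalize)
  have cE: "content (Polynomial.smult E f) = \<bar>E\<bar>" by (simp add: cf)
  have cM: "content (MZ * G) = content MZ * content G" by (rule content_mult)
  define c where "c = content MZ"
  define g where "g = content G"
  have absE: "\<bar>E\<bar> = c * g" using cE cM eq2 by (simp add: c_def g_def)
  have lE: "lead_coeff (Polynomial.smult E f) = E" using f(2) by simp
  have lM: "lead_coeff (MZ * G) = e * lead_coeff G" by (simp add: lead_coeff_mult lcMZ)
  have Elg: "E = e * lead_coeff G" using lE lM eq2 by simp
  have G0: "lead_coeff G \<noteq> 0" using Elg E0 by auto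
  have gdvd: "g dvd lead_coeff G" unfolding g_def by (rule content_dvd_coeff)
  have gle: "g \<le> \<bar>lead_coeff G\<bar>" using dvd_imp_le_int[OF G0 gdvd] by simp
  have c0: "c \<ge> 0" unfolding c_def using normalize_content[of MZ] by (metis abs_ge_zero normalize_int_def)
  have cdvd: "c dvd e" unfolding c_def using content_dvd_coeff[of MZ 2] by (simp add: MZ_def numeral_2_eq_2)
  have cle: "c \<le> e" using cdvd e0 by (simp add: zdvd_imp_le)
  have "e * \<bar>lead_coeff G\<bar> = c * g" using absE Elg e0 by (simp add: abs_mult)
  also have "\<dots> \<le> c * \<bar>lead_coeff G\<bar>" using gle c0 by (simp add: mult_left_mono)
  finally have "e \<le> c" using G0 by simp
  with cle have ce: "c = e" by simp
  have "e dvd Polynomial.coeff MZ 0" by (metis c_def ce content_dvd_coeff)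
  then have "e dvd n1" by (simp add: MZ_def)
  then obtain k2 where k2: "n1 = e * k2" by (elim dvdE)
  have "e dvd Polynomial.coeff MZ 1" by (metis c_def ce content_dvd_coeff)
  then have "e dvd t1" by (simp add: MZ_def)
  then obtain k1 where k1: "t1 = e * k1" by (elim dvdE)
  have "2 * p = of_int t1 / of_int e" using b1 b2 by (simp add: pe t1_def e_def field_simps)
  also have "\<dots> = of_int k1" using e0 by (simp add: k1)
  finally have A: "2 * p \<in> \<int>" by simp
  have "p * p - q * q * of_int d = of_int n1 / of_int e" using b1 b2 by (simp add: pe qe n1_def e_def field_simps)
  also have "\<dots> = of_int k2" using e0 by (simp add: k2)
  finally have B: "p * p - q * q * of_int d \<in> \<int>" by simp
  from A B show ?thesis ..
qed

lemma rat_sqf_int: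
  fixes r :: rat and k :: int
  assumes sq: "squarefree k" and h: "r * r * of_int k \<in> \<int>"
  shows "r \<in> \<int>"
proof -
  obtain a b where ab: "quotient_of r = (a, b)" by (cases "quotient_of r")
  have b: "b > 0" using ab by (rule quotient_of_denom_pos)
  have cop: "coprime a b" using ab by (rule quotient_of_coprime)
  have re: "r = of_int a / of_int b" using ab by (rule quotient_of_div)
  obtain D where D: "r * r * of_int k = of_int D" using h by (auto elim: Ints_cases)
  have "of_int (a * a * k) = (of_int (D * b * b) :: rat)"
    using D b unfolding re by (simp add: field_simps)
  then have eq: "a * a * k = D * b * b" by (simp only: of_int_eq_iff)
  have "b ^ 2 dvd (a ^ 2) * k" using eq by (simp add: power2_eq_square mult.assoc)
  moreover have "coprime (b ^ 2) (a ^ 2)" using cop by (simp add: coprime_commute)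
  ultimately have "b ^ 2 dvd k" using coprime_dvd_mult_right_iff by blast
  then have "b dvd 1" using sq unfolding squarefree_def by blast
  then have "b = 1" using b by simp
  then show ?thesis using re by simp
qed

lemma OK_rep:
  assumes d: "d < 0" and fd: "fund_disc d" and zK: "z \<in> OK d"
  shows "\<exists>s t. z = of_int s + of_int t * ww d"
proof -
  have zKf: "z \<in> Kf d" and ai: "algebraic_int z" using zK by (auto simp: OK_def)
  obtain p q where z: "z = of_rat p + of_rat q * sqrtd d" using zKf unfolding Kf_def by blast
  have TM: "2 * p \<in> \<int> \<and> p * p - q * q * of_int d \<in> \<int>" using alg_int_TM[OF d z ai] .
  obtain T where T: "2 * p = of_int T" using TM by (auto elim: Ints_cases)
  obtain M where M: "p * p - q * q * of_int d = of_int M" using TM by (auto elim: Ints_cases)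
  have rr: "(2 * q) * (2 * q) * of_int d = of_int (T * T - 4 * M)"
  proof -
    have "(2 * q) * (2 * q) * of_int d = (2*p)*(2*p) - 4 * (p * p - q * q * of_int d)" by (simp add: algebra_simps)
    also have "\<dots> = of_int (T * T - 4 * M)" by (simp add: T M)
    finally show ?thesis .
  qed
  have "\<exists>R. 2 * q = of_int R \<and> even (T - R * d)"
  proof (cases "d mod 4 = 1 \<and> squarefree d")
    case True
    have "2 * q \<in> \<int>" using rat_sqf_int[of d "2*q"] True rr by simp
    then obtain R where R: "2 * q = of_int R" by (auto elim: Ints_cases)
    have "of_int (R * R * d) = (of_int (T * T - 4 * M) :: rat)" using rr by (simp add: R)
    then have eq: "R * R * d = T * T - 4 * M" by (simp only: of_int_eq_iff)
    have "d mod 4 = 1" using True by simp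
    then have dodd: "odd d" by presburger
    have "even (T * T - R * R * d)" using eq by simp
    then have "even (T - R * d)" using dodd by (auto simp: even_mult_iff)
    with R show ?thesis by blast
  next
    case False
    then obtain m where m: "d = 4 * m" "m mod 4 = 2 \<or> m mod 4 = 3" "squarefree m"
      using fd unfolding fund_disc_def by blast
    have h4: "(4 * q) * (4 * q) * of_int m = (2 * q) * (2 * q) * of_int d" by (simp add: m algebra_simps)
    have "(4 * q) * (4 * q) * of_int m = of_int (T * T - 4 * M)" using h4 rr by (rule trans)
    then have "(4 * q) * (4 * q) * of_int m \<in> \<int>" by (metis Ints_of_int)
    then have "4 * q \<in> \<int>" using rat_sqf_int m(3) by blast
    then obtain R' where R': "4 * q = of_int R'" by (auto elim: Ints_cases)
    have "of_int (R' * R' * m) = (of_int (T * T - 4 * M) :: rat)"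
    proof -
      have "of_int (R' * R' * m) = (4 * q) * (4 * q) * (of_int m :: rat)" by (simp add: R')
      also have "\<dots> = (2 * q) * (2 * q) * of_int d" by (simp add: m algebra_simps)
      finally show ?thesis using rr by simp
    qed
    then have eq: "T * T = 4 * M + R' * R' * m" by (simp only: of_int_eq_iff)
    have "even R'"
    proof (rule ccontr)
      assume "odd R'"
      then obtain j where j: "R' = 2 * j + 1" by (elim oddE)
      show False
      proof (cases "even T")
        case True
        then obtain i where i: "T = 2 * i" by (elim evenE)
        have "m = 4 * (i * i - M - (j * j + j) * m)" using eq unfolding i j by (simp add: algebra_simps)
        moreover have "\<And>X. m = 4 * X \<Longrightarrow> m mod 4 = 0" by presburger
        ultimately show False using m(2) by fastforce
      next
        case False
        then obtain i where i: "T = 2 * i + 1" by (elim oddE)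
        have "m = 4 * (i * i + i - M - (j * j + j) * m) + 1" using eq unfolding i j by (simp add: algebra_simps)
        moreover have "\<And>X. m = 4 * X + 1 \<Longrightarrow> m mod 4 = 1" by presburger
        ultimately show False using m(2) by fastforce
      qed
    qed
    then obtain R where R: "R' = 2 * R" by (elim evenE)
    have q2: "2 * q = of_int R" using R' R by simp
    have "even (T * T)" using eq R by simp
    then have "even T" by simp
    then have "even (T - R * d)" using m(1) by simp
    with q2 show ?thesis by blast
  qed
  then obtain R where R: "2 * q = of_int R" and ev: "even (T - R * d)" by blast
  obtain s where s: "T - R * d = 2 * s" using ev by (elim evenE)
  have "z = of_int s + of_int R * ww d"
  proof -
    have pe: "of_rat p = (of_int T / 2 :: complex)"
      using arg_cong[OF T, of "\<lambda>x. (of_rat x :: complex) / 2"] by (simp add: of_rat_mult)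
    have qe: "of_rat q = (of_int R / 2 :: complex)"
      using arg_cong[OF R, of "\<lambda>x. (of_rat x :: complex) / 2"] by (simp add: of_rat_mult)
    have Te: "(of_int T :: complex) = 2 * of_int s + of_int R * of_int d"
      using arg_cong[OF s, of "of_int :: int \<Rightarrow> complex"] by (simp add: algebra_simps)
    show ?thesis unfolding z pe qe ww_def Te by (simp add: field_simps)
  qed
  then show ?thesis by blast
qed

definition ee :: "int \<Rightarrow> int" where "ee d = (d * d - d) div 4"

locale qctx =
  fixes d :: int
  assumes dneg: "d < 0" and fd: "fund_disc d"
begin

lemma ee4: "4 * ee d = d * d - d"
proof -
  have "4 dvd d * (d - 1)"
  proof (cases "d mod 4 = 1")
    case True
    then have "4 dvd d - 1" by presburger
    then show ?thesis by simp
  next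
    case False
    then obtain m where "d = 4 * m" using fd unfolding fund_disc_def by blast
    then show ?thesis by simp
  qed
  then have "4 dvd d * d - d" by (simp add: algebra_simps)
  then show ?thesis unfolding ee_def by simp
qed

lemma ee_c: "(of_int (ee d) :: complex) = (of_int d * of_int d - of_int d) / 4"
proof -
  have "(of_int (4 * ee d) :: complex) = of_int (d * d - d)" by (simp only: ee4)
  then have "of_int (ee d) * 4 = (of_int d * of_int d - of_int d :: complex)" by (simp add: mult.commute)
  then show ?thesis by (simp add: eq_divide_eq)
qed

lemma S2: "sqrtd d * sqrtd d = of_int d" using sqrtd_sq[OF dneg] .

lemma ww_sq: "ww d * ww d = of_int d * ww d - of_int (ee d)"
  unfolding ee_c ww_def using S2 by (simp add: field_simps)

lemma cnj_ww: "cnj (ww d) = of_int d - ww d"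
  unfolding ww_def by (simp add: complex_eq_iff)

lemma Im_ww: "Im (ww d) = sqrt (- real_of_int d) / 2"
  unfolding ww_def by simp

lemma Im_ww_nz: "Im (ww d) \<noteq> 0"
  using dneg by (simp add: Im_ww)

lemma norm_rep: "(of_int s + of_int t * ww d) * cnj (of_int s + of_int t * ww d) = of_int (s*s + s*t*d + t*t*ee d)"
proof -
  have "(of_int s + of_int t * ww d) * cnj (of_int s + of_int t * ww d)
      = (of_int s + of_int t * ww d) * (of_int s + of_int t * (of_int d - ww d))"
    by (simp add: cnj_ww)
  also have "\<dots> = of_int s * of_int s + of_int s * of_int t * of_int d + of_int t * of_int t * (of_int d * ww d - ww d * ww d)"
    by (simp add: algebra_simps)
  also have "\<dots> = of_int (s*s + s*t*d + t*t*ee d)" by (simp add: ww_sq)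
  finally show ?thesis .
qed

lemma rep_alg_int: "algebraic_int (of_int s + of_int t * ww d :: complex)"
proof -
  define z where "z = (of_int s + of_int t * ww d :: complex)"
  define nn where "nn = s*s + s*t*d + t*t*ee d"
  define tr where "tr = 2 * s + t * d"
  have "poly [:of_int nn, - of_int tr, 1:] z = of_int nn - of_int tr * z + z * z"
    by (simp add: algebra_simps)
  also have "\<dots> = of_int nn - of_int tr * z + (of_int s * of_int s + 2 * of_int s * of_int t * ww d + of_int t * of_int t * (ww d * ww d))"
    by (simp add: z_def algebra_simps)
  also have "\<dots> = 0" by (simp add: ww_sq nn_def tr_def z_def algebra_simps)
  finally have "poly [:of_int nn, - of_int tr, 1:] z = 0" .
  moreover have "\<forall>i. Polynomial.coeff [:of_int nn, - of_int tr, (1::complex):] i \<in> \<int>"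
    by (auto simp: coeff_pCons split: nat.split)
  moreover have "lead_coeff [:of_int nn, - of_int tr, (1::complex):] = 1" by simp
  ultimately show ?thesis unfolding z_def by (intro algebraic_int.intros) auto
qed

lemma OK_iff: "z \<in> OK d \<longleftrightarrow> (\<exists>s t. z = of_int s + of_int t * ww d)"
  using OK_rep[OF dneg fd, of z] rep_Kf rep_alg_int unfolding OK_def by blast

lemma OK_Kf: "z \<in> OK d \<Longrightarrow> z \<in> Kf d" by (simp add: OK_def)

lemma OK_of_int [simp]: "of_int k \<in> OK d"
  unfolding OK_iff by (rule exI[of _ k], rule exI[of _ 0]) simp

lemma OK_0 [simp]: "0 \<in> OK d" using OK_of_int[of 0] by simp
lemma OK_1 [simp]: "1 \<in> OK d" using OK_of_int[of 1] by simp

lemma OK_add: "x \<in> OK d \<Longrightarrow> y \<in> OK d \<Longrightarrow> x + y \<in> OK d"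
  unfolding OK_iff
proof (elim exE)
  fix s1 t1 s2 t2 assume "x = of_int s1 + of_int t1 * ww d" "y = of_int s2 + of_int t2 * ww d"
  then have "x + y = of_int (s1 + s2) + of_int (t1 + t2) * ww d" by (simp add: algebra_simps)
  then show "\<exists>s t. x + y = of_int s + of_int t * ww d" by blast
qed

lemma OK_uminus: "x \<in> OK d \<Longrightarrow> - x \<in> OK d"
  unfolding OK_iff
proof (elim exE)
  fix s1 t1 assume "x = of_int s1 + of_int t1 * ww d"
  then have "- x = of_int (- s1) + of_int (- t1) * ww d" by (simp add: algebra_simps)
  then show "\<exists>s t. - x = of_int s + of_int t * ww d" by blast
qed

lemma OK_diff: "x \<in> OK d \<Longrightarrow> y \<in> OK d \<Longrightarrow> x - y \<in> OK d"
  using OK_add[of x "- y"] OK_uminus[of y] by simp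

lemma OK_mult: "x \<in> OK d \<Longrightarrow> y \<in> OK d \<Longrightarrow> x * y \<in> OK d"
  unfolding OK_iff
proof (elim exE)
  fix s1 t1 s2 t2 assume xy: "x = of_int s1 + of_int t1 * ww d" "y = of_int s2 + of_int t2 * ww d"
  have "x * y = of_int s1 * of_int s2 + (of_int s1 * of_int t2 + of_int t1 * of_int s2) * ww d + of_int t1 * of_int t2 * (ww d * ww d)"
    unfolding xy by (simp add: algebra_simps)
  also have "\<dots> = of_int (s1 * s2 - t1 * t2 * ee d) + of_int (s1 * t2 + t1 * s2 + t1 * t2 * d) * ww d"
    by (simp add: ww_sq algebra_simps)
  finally show "\<exists>s t. x * y = of_int s + of_int t * ww d" by blast
qed

lemma OK_cnj: "x \<in> OK d \<Longrightarrow> cnj x \<in> OK d"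
  unfolding OK_iff
proof (elim exE)
  fix s1 t1 assume "x = of_int s1 + of_int t1 * ww d"
  then have "cnj x = of_int (s1 + t1 * d) + of_int (- t1) * ww d" by (simp add: cnj_ww algebra_simps)
  then show "\<exists>s t. cnj x = of_int s + of_int t * ww d" by blast
qed

lemma OK_sum: "(\<And>i. i < (n::nat) \<Longrightarrow> f i \<in> OK d) \<Longrightarrow> (\<Sum>i<n. f i) \<in> OK d"
  by (induction n) (auto intro: OK_add)

lemma OK_int_div:
  assumes z: "z \<in> OK d" and N: "N \<noteq> 0" and e: "of_int N * z = of_int K"
  shows "\<exists>j. z = of_int j"
proof -
  obtain s t where st: "z = of_int s + of_int t * ww d" using z unfolding OK_iff by blast
  have "Im (of_int N * z) = 0" using e by simp
  then have "of_int N * (of_int t * Im (ww d)) = (0::real)" unfolding st by simp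
  then have "t = 0" using N Im_ww_nz by simp
  then show ?thesis using st by simp
qed

lemma not_unit_N:
  assumes N: "N > 1" and z: "z \<in> OK d" and e: "of_int N * z = 1"
  shows False
proof -
  obtain j where j: "z = of_int j" using OK_int_div[OF z, of N 1] N e by auto
  have "of_int (N * j) = (1 :: complex)" using e j by simp
  then have "N * j = 1" by (simp only: of_int_eq_1_iff)
  then have "N dvd 1" by (metis dvd_triv_left)
  then show False using N by simp
qed

end


context qctx
begin

lemma prin_mem: "y \<in> OK d \<Longrightarrow> x * y \<in> prin d x" unfolding prin_def by blast
lemma prin_E: "z \<in> prin d x \<Longrightarrow> \<exists>y\<in>OK d. z = x * y" unfolding prin_def by blast
lemma prin_self: "x \<in> prin d x" using prin_mem[of 1 x] by simp
lemma prin_1: "prin d 1 = OK d" unfolding prin_def by auto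
lemma prin_sub_OK: "x \<in> OK d \<Longrightarrow> prin d x \<subseteq> OK d" using OK_mult by (auto simp: prin_def)

lemma fp_mem: "u \<in> I \<Longrightarrow> v \<in> J \<Longrightarrow> u * v \<in> fid_prod I J"
  unfolding fid_prod_def
  by (rule CollectI, intro exI[of _ "1::nat"] exI[of _ "\<lambda>_. u"] exI[of _ "\<lambda>_. v"]) simp

lemma fp_sub:
  assumes a: "a \<in> fid_prod (prin d x) J" and J: "J \<subseteq> prin d y"
  shows "\<exists>b\<in>OK d. a = x * y * b"
proof -
  obtain n :: nat and X Y :: "nat \<Rightarrow> complex" where ae: "a = (\<Sum>i<n. X i * Y i)" and XY: "\<forall>i<n. X i \<in> prin d x \<and> Y i \<in> J"
    using a unfolding fid_prod_def by blast
  have "\<forall>i. \<exists>uv. i < n \<longrightarrow> fst uv \<in> OK d \<and> snd uv \<in> OK d \<and> X i = x * fst uv \<and> Y i = y * snd uv"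
  proof
    fix i
    show "\<exists>uv. i < n \<longrightarrow> fst uv \<in> OK d \<and> snd uv \<in> OK d \<and> X i = x * fst uv \<and> Y i = y * snd uv"
    proof (cases "i < n")
      case True
      then have "X i \<in> prin d x" "Y i \<in> prin d y" using XY J by auto
      then obtain u v where "u \<in> OK d" "X i = x * u" "v \<in> OK d" "Y i = y * v" using prin_E by meson
      then show ?thesis by (intro exI[of _ "(u, v)"]) simp
    qed simp
  qed
  then obtain f where f: "\<And>i. i < n \<Longrightarrow> fst (f i) \<in> OK d \<and> snd (f i) \<in> OK d \<and> X i = x * fst (f i) \<and> Y i = y * snd (f i)"
    using choice by metis
  define b where "b = (\<Sum>i<n. fst (f i) * snd (f i))"
  have "b \<in> OK d" unfolding b_def by (rule OK_sum) (use f OK_mult in blast)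
  moreover have "a = x * y * b"
    unfolding ae b_def sum_distrib_left
    by (rule sum.cong) (use f in auto)
  ultimately show ?thesis by blast
qed

lemma fp_prin: "fid_prod (prin d x) (prin d y) = prin d (x * y)"
proof
  show "fid_prod (prin d x) (prin d y) \<subseteq> prin d (x * y)"
    using fp_sub[of _ x "prin d y" y] prin_mem by blast
  show "prin d (x * y) \<subseteq> fid_prod (prin d x) (prin d y)"
  proof
    fix z assume "z \<in> prin d (x * y)"
    then obtain b where b: "b \<in> OK d" "z = x * y * b" using prin_E by blast
    have "x * (y * b) \<in> fid_prod (prin d x) (prin d y)"
      by (rule fp_mem) (use prin_self prin_mem b in auto)
    then show "z \<in> fid_prod (prin d x) (prin d y)" using b by (simp add: mult.assoc)
  qed
qed

lemma cop:
  assumes al: "\<alpha> \<in> OK d" "\<alpha> \<noteq> 0" and s: "s \<in> OK d" "\<alpha> * s - 1 \<in> prin d (of_int N)"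
  shows "int_coprime d N (prin d \<alpha>)"
proof -
  have sub: "prin d \<alpha> \<subseteq> OK d" using prin_sub_OK al by blast
  have fi: "frac_ideal d (prin d \<alpha>)"
    unfolding frac_ideal_def
  proof (intro conjI)
    show "prin d \<alpha> \<subseteq> Kf d" using sub OK_Kf by blast
    show "0 \<in> prin d \<alpha>" using prin_mem[of 0 \<alpha>] by simp
    show "prin d \<alpha> \<noteq> {0}" using prin_self[of \<alpha>] al by blast
    show "\<forall>x\<in>prin d \<alpha>. \<forall>y\<in>prin d \<alpha>. x + y \<in> prin d \<alpha>"
    proof (intro ballI)
      fix x y assume "x \<in> prin d \<alpha>" "y \<in> prin d \<alpha>"
      then obtain u v where "u \<in> OK d" "x = \<alpha> * u" "v \<in> OK d" "y = \<alpha> * v" using prin_E by meson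
      then show "x + y \<in> prin d \<alpha>" using prin_mem[of "u + v" \<alpha>] OK_add by (simp add: algebra_simps)
    qed
    show "\<forall>r\<in>OK d. \<forall>x\<in>prin d \<alpha>. r * x \<in> prin d \<alpha>"
    proof (intro ballI)
      fix r x assume "r \<in> OK d" "x \<in> prin d \<alpha>"
      then obtain u where "u \<in> OK d" "x = \<alpha> * u" using prin_E by meson
      then show "r * x \<in> prin d \<alpha>" using prin_mem[of "r * u" \<alpha>] OK_mult \<open>r \<in> OK d\<close> by (simp add: algebra_simps)
    qed
    show "\<exists>c\<in>OK d. c \<noteq> 0 \<and> (\<forall>x\<in>prin d \<alpha>. c * x \<in> OK d)"
      using sub by (intro bexI[of _ 1]) auto
  qed
  have fs: "fid_sum (prin d \<alpha>) (prin d (of_int N)) = OK d"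
  proof
    show "fid_sum (prin d \<alpha>) (prin d (of_int N)) \<subseteq> OK d"
      using sub prin_sub_OK[of "of_int N"] OK_add unfolding fid_sum_def by auto
    show "OK d \<subseteq> fid_sum (prin d \<alpha>) (prin d (of_int N))"
    proof
      fix z assume z: "z \<in> OK d"
      obtain t where t: "t \<in> OK d" "\<alpha> * s - 1 = of_int N * t" using s prin_E by blast
      have "z = \<alpha> * (s * z) + of_int N * (- (t * z))"
      proof -
        have "\<alpha> * (s * z) + of_int N * (- (t * z)) = z * (\<alpha> * s - of_int N * t)" by (simp add: algebra_simps)
        also have "\<alpha> * s - of_int N * t = 1" using t(2) by (simp add: algebra_simps)
        finally show ?thesis by simp
      qed
      moreover have "\<alpha> * (s * z) \<in> prin d \<alpha>" using prin_mem OK_mult s z by blast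
      moreover have "of_int N * (- (t * z)) \<in> prin d (of_int N)" using prin_mem OK_mult OK_uminus t z by blast
      ultimately show "z \<in> fid_sum (prin d \<alpha>) (prin d (of_int N))" unfolding fid_sum_def by blast
    qed
  qed
  show ?thesis unfolding int_coprime_def using fi sub fs by blast
qed

lemma core:
  assumes x: "x \<in> Kf d" "x \<noteq> 0" and g: "\<gamma> \<in> OK d" "\<gamma> \<noteq> 0" and bq: "bq \<in> OK d"
    and aq: "aq = x * bq" "aq \<in> OK d" "aq \<noteq> 0"
    and sx: "sx \<in> OK d" "aq * sx - 1 \<in> prin d (of_int N)"
    and sy: "sy \<in> OK d" "\<gamma> * bq * sy - 1 \<in> prin d (of_int N)"
    and c: "\<gamma> * bq - aq \<in> prin d (of_int N)"
  shows "prin d (\<gamma> / x) \<in> PK1 d N \<and> prin d \<gamma> = fid_prod (prin d x) (prin d (\<gamma> / x))"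
proof
  have bnz: "bq \<noteq> 0" using aq by auto
  have yK: "\<gamma> / x \<in> Kf d" using Kf_div[OF dneg] OK_Kf g x by blast
  have y0: "\<gamma> / x \<noteq> 0" using g x by simp
  have gb: "\<gamma> * bq \<in> OK d" "\<gamma> * bq \<noteq> 0" using OK_mult g bq bnz by auto
  have i1: "int_coprime d N (prin d (\<gamma> * bq))" by (rule cop[OF gb sy])
  have i2: "int_coprime d N (prin d aq)" by (rule cop[OF aq(2,3) sx])
  have i3: "\<gamma> / x = \<gamma> * bq / aq" using bnz aq(1) by simp
  have "mult_cong1 d N (\<gamma> / x)"
    unfolding mult_cong1_def using i1 i2 i3 gb aq c by blast
  then show "prin d (\<gamma> / x) \<in> PK1 d N" using yK y0 unfolding PK1_def by blast
  show "prin d \<gamma> = fid_prod (prin d x) (prin d (\<gamma> / x))" using x by (simp add: fp_prin)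
qed

lemma normcop:
  assumes al: "\<alpha> = of_int s + of_int t * ww d" and b0: "b0 \<in> OK d" and z: "z \<in> OK d"
    and e: "\<alpha> * b0 - 1 = of_int N * z" and N: "N \<noteq> 0"
  shows "coprime N (s*s + s*t*d + t*t*ee d)"
proof -
  obtain s' t' where b0e: "b0 = of_int s' + of_int t' * ww d" using b0 unfolding OK_iff by blast
  define na where "na = s*s + s*t*d + t*t*ee d"
  define nb where "nb = s'*s' + s'*t'*d + t'*t'*ee d"
  have h1: "\<alpha> * cnj \<alpha> = of_int na" unfolding al na_def by (rule norm_rep)
  have h2: "b0 * cnj b0 = of_int nb" unfolding b0e nb_def by (rule norm_rep)
  have "cnj (\<alpha> * b0 - 1) = cnj (of_int N * z)" using e by simp
  then have h3: "cnj \<alpha> * cnj b0 = 1 + of_int N * cnj z" by (simp add: algebra_simps)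
  have h4: "\<alpha> * b0 = 1 + of_int N * z" using e by (simp add: algebra_simps)
  define W where "W = z + cnj z + of_int N * z * cnj z"
  have WOK: "W \<in> OK d" unfolding W_def using z OK_cnj OK_add OK_mult OK_of_int by metis
  have "of_int (na * nb) = (\<alpha> * b0) * (cnj \<alpha> * cnj b0)" by (simp add: h1[symmetric] h2[symmetric] mult_ac)
  also have "\<dots> = 1 + of_int N * W" unfolding h3 h4 W_def by (simp add: algebra_simps)
  finally have "of_int N * W = of_int (na * nb - 1)" by simp
  then obtain j where j: "W = of_int j" using OK_int_div[OF WOK N] by blast
  have "of_int (N * j) = (of_int (na * nb - 1) :: complex)" using \<open>of_int N * W = _\<close> j by simp
  then have Nj: "N * j = na * nb - 1" by (simp only: of_int_eq_iff)
  show ?thesis unfolding na_def[symmetric]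
  proof (rule coprimeI)
    fix g assume "g dvd N" "g dvd na"
    then have "g dvd na * nb - N * j" by simp
    then show "is_unit g" using Nj by simp
  qed
qed

end


theorem lemma2p2:
  fixes d N a b c :: int and P :: "complex set set"
  assumes "d < 0" and "fund_disc d" and "N > 0"
    and "QN d N a b c"
    and "subgroup_IK d N P" and "PK1 d N \<subseteq> P" and "P \<subseteq> PK d N"
  shows "\<forall>C \<in> PK d N. \<exists>u v :: int. (u, v) \<noteq> (0, 0) \<and> gcd N (qf a b c v (- u)) = 1 \<and>
           (\<exists>J \<in> P. prin d (of_int u * omegaQ d a b + of_int v) = fid_prod C J)"
proof
  interpret qctx d using assms(1,2) by unfold_locales
  fix C assume "C \<in> PK d N"
  then obtain x where C: "C = prin d x" and xK: "x \<in> Kf d" and x0: "x \<noteq> 0" and xI: "prin d x \<in> IK d N"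
    unfolding PK_def by blast
  from xI obtain A B where fi: "frac_ideal d (prin d x)" and A: "int_coprime d N A"
    and B: "int_coprime d N B" and AB: "fid_prod (prin d x) B = A"
    unfolding IK_def by blast
  have dd: "b^2 - 4*a*c = d" and apos: "a > 0" and gNa: "gcd N a = 1"
    using assms(4) unfolding QN_def by auto
  show "\<exists>u v :: int. (u, v) \<noteq> (0, 0) \<and> gcd N (qf a b c v (- u)) = 1 \<and>
           (\<exists>J \<in> P. prin d (of_int u * omegaQ d a b + of_int v) = fid_prod C J)"
  proof (cases "N = 1")
    case True
    obtain c0 where c0: "c0 \<in> OK d" "c0 \<noteq> 0" "\<forall>z\<in>prin d x. c0 * z \<in> OK d"
      using fi unfolding frac_ideal_def by blast
    have cx: "c0 * x \<in> OK d" using c0(3) prin_self by blast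
    have pN: "prin d (of_int N) = OK d" using True prin_1 by simp
    have k: "prin d (1 / x) \<in> PK1 d N \<and> prin d 1 = fid_prod (prin d x) (prin d (1 / x))"
    proof (rule core[where bq = c0 and aq = "c0 * x" and sx = 1 and sy = 1])
    qed (use xK x0 c0 cx pN OK_diff OK_mult in \<open>auto simp: mult.commute\<close>)
    have J: "\<exists>J\<in>P. prin d 1 = fid_prod C J" using k assms(6) C by auto
    show ?thesis
      by (intro exI[of _ "0::int"] exI[of _ "1::int"]) (use J True in simp)
  next
    case False
    then have N1: "N > 1" using assms(3) by simp
    have BOK: "B \<subseteq> OK d" and AOK: "A \<subseteq> OK d" using A B unfolding int_coprime_def by auto
    have "1 \<in> fid_sum B (prin d (of_int N))" using B unfolding int_coprime_def by simp
    then obtain \<beta> \<rho> where be: "\<beta> \<in> B" "\<rho> \<in> OK d" "1 = \<beta> + of_int N * \<rho>"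
      unfolding fid_sum_def prin_def by blast
    have "1 \<in> fid_sum A (prin d (of_int N))" using A unfolding int_coprime_def by simp
    then obtain a0 \<rho>2 where ae: "a0 \<in> A" "\<rho>2 \<in> OK d" "1 = a0 + of_int N * \<rho>2"
      unfolding fid_sum_def prin_def by blast
    have a0OK: "a0 \<in> OK d" using ae AOK by blast
    have "a0 \<in> fid_prod (prin d x) B" using AB ae by simp
    then obtain b0 where b0: "b0 \<in> OK d" "a0 = x * 1 * b0"
      using fp_sub[of a0 x B 1] BOK prin_1 by blast
    define \<alpha> where "\<alpha> = x * \<beta>"
    have "\<alpha> \<in> A" unfolding \<alpha>_def AB[symmetric] by (rule fp_mem[OF prin_self be(1)])
    then have alOK: "\<alpha> \<in> OK d" using AOK by blast
    have e1: "\<alpha> * b0 = \<beta> * a0" using b0 by (simp add: \<alpha>_def)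
    have bet: "\<beta> = 1 - of_int N * \<rho>" using be(3) by (simp add: eq_diff_eq)
    have a0e: "a0 = 1 - of_int N * \<rho>2" using ae(3) by (simp add: eq_diff_eq)
    have a00: "a0 \<noteq> 0"
    proof
      assume "a0 = 0"
      then have "of_int N * \<rho>2 = 1" using ae by simp
      then show False using not_unit_N[OF N1 ae(2)] by simp
    qed
    have c1: "\<alpha> * b0 - a0 = of_int N * (- (a0 * \<rho>))" unfolding e1 bet by (simp add: algebra_simps)
    have c2: "a0 * 1 - 1 = of_int N * (- \<rho>2)" unfolding a0e by (simp add: algebra_simps)
    define zz where "zz = of_int N * \<rho> * \<rho>2 - \<rho> - \<rho>2"
    have zzOK: "zz \<in> OK d" unfolding zz_def using be ae OK_diff OK_mult OK_of_int by metis
    have c3: "\<alpha> * b0 - 1 = of_int N * zz" unfolding e1 bet a0e zz_def by (simp add: algebra_simps)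
    have al0: "\<alpha> \<noteq> 0"
    proof
      assume "\<alpha> = 0"
      then have "- 1 = of_int N * zz" using c3 by simp
      then have "of_int N * (- zz) = 1" by (metis minus_equation_iff mult_minus_right)
      then show False using not_unit_N[OF N1 OK_uminus[OF zzOK]] by simp
    qed
    have k: "prin d (\<alpha> / x) \<in> PK1 d N \<and> prin d \<alpha> = fid_prod (prin d x) (prin d (\<alpha> / x))"
    proof (rule core[where bq = b0 and aq = a0 and sx = 1 and sy = 1])
      show "a0 * 1 - 1 \<in> prin d (of_int N)" unfolding c2 by (rule prin_mem) (use ae OK_uminus in auto)
      show "\<alpha> * b0 * 1 - 1 \<in> prin d (of_int N)" unfolding mult_1_right c3 by (rule prin_mem[OF zzOK])
      show "\<alpha> * b0 - a0 \<in> prin d (of_int N)" unfolding c1 by (rule prin_mem) (use be a0OK OK_mult OK_uminus in auto)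
    qed (use xK x0 alOK al0 b0 a0OK a00 in auto)
    obtain s t where st: "\<alpha> = of_int s + of_int t * ww d" using alOK unfolding OK_iff by blast
    have ncop: "coprime N (s*s + s*t*d + t*t*ee d)"
      using normcop[OF st b0(1) zzOK c3] N1 by simp
    have "even (b + d)"
    proof -
      have "b + d = b * (b + 1) - 4 * a * c" using dd by (simp add: power2_eq_square algebra_simps)
      then show ?thesis by simp
    qed
    then obtain k where k2: "b + d = 2 * k" by (elim evenE)
    define u where "u = a * t"
    define v where "v = s + t * k"
    have gam: "of_int u * omegaQ d a b + of_int v = \<alpha>"
    proof -
      have kc: "(of_int k :: complex) = (of_int b + of_int d) / 2"
        using arg_cong[OF k2, of "of_int :: int \<Rightarrow> complex"] by simp
      have vc: "(of_int v :: complex) = of_int s + of_int t * ((of_int b + of_int d) / 2)"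
        unfolding v_def by (simp add: kc)
      show ?thesis unfolding vc u_def st omegaQ_def ww_def using apos by (simp add: field_simps)
    qed
    have kk: "k * k - b * k + a * c = ee d"
    proof -
      have "4 * (k * k - b * k + a * c) = (2*k) * (2*k) - 2 * b * (2 * k) + 4 * a * c" by (simp add: algebra_simps)
      also have "\<dots> = d * d - d" unfolding k2[symmetric] using dd by (simp add: power2_eq_square algebra_simps)
      also have "\<dots> = 4 * ee d" by (simp add: ee4)
      finally show ?thesis by simp
    qed
    have qfe: "qf a b c v (- u) = a * (s*s + s*t*d + t*t*ee d)"
    proof -
      have "qf a b c v (- u) = a * (s*s + s*t*(2*k - b) + t*t*(k * k - b * k + a * c))"
        unfolding qf_def u_def v_def by (simp add: power2_eq_square algebra_simps)
      also have "2 * k - b = d" using k2 by simp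
      finally show ?thesis by (simp add: kk)
    qed
    have f1: "(u, v) \<noteq> (0, 0)"
    proof
      assume "(u, v) = (0, 0)"
      then have "\<alpha> = 0" using gam by simp
      then show False using al0 by simp
    qed
    have "coprime N a" using gNa by (simp add: coprime_iff_gcd_eq_1)
    then have "coprime N (qf a b c v (- u))" unfolding qfe using ncop by simp
    then have f2: "gcd N (qf a b c v (- u)) = 1" by (simp add: coprime_iff_gcd_eq_1)
    have f3: "\<exists>J\<in>P. prin d (of_int u * omegaQ d a b + of_int v) = fid_prod C J"
      unfolding gam C using k assms(6) by blast
    show ?thesis by (rule exI[of _ u], rule exI[of _ v], intro conjI f1 f2 f3)
  qed
qed

end
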